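(* Let $A$ be a Boolean algebra and $g\colon A^2\to A$ a binary sufficiency operator satisfying (ABTW): for all $a\in A$, $a\neq0\Rightarrow g(a,a)\leq a$. Let $a,b\in A$. If $g(a,b)\neq0$, then $a\cdot b\leq g(a,b)$. If, additionally, $a\cdot b\neq0$, then $g(a,b)=a\cdot b$ and $a\cdot b$ is an atom of $A$.
   Context: $A$ is a Boolean algebra with at least two elements (operations $+,\cdot,-,0,1$). A binary sufficiency operator is a map $g\colon A^2\to A$ with $g(x,y)=1$ whenever $x=0$ or $y=0$, and co-additive in each argument: $g(x+x',y)=g(x,y)\cdot g(x',y)$ and $g(x,y+y')=g(x,y)\cdot g(x,y')$ (hence $g$ is antitone in each argument). *)

theory Defs
  imports Main
begin

text \<open>Boolean algebra: type class boolean_algebra, with + = sup, \<cdot> = inf, - = complement,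
  0 = bot, 1 = top.\<close>

definition sufficiency_op2 :: "('a::boolean_algebra \<Rightarrow> 'a \<Rightarrow> 'a) \<Rightarrow> bool" where
  "sufficiency_op2 g \<longleftrightarrow>
     (\<forall>x y. (x = bot \<or> y = bot) \<longrightarrow> g x y = top) \<and>
     (\<forall>x x' y. g (sup x x') y = inf (g x y) (g x' y)) \<and>
     (\<forall>x y y'. g x (sup y y') = inf (g x y) (g x y'))"

definition is_atom :: "'a::boolean_algebra \<Rightarrow> bool" where
  "is_atom a \<longleftrightarrow> a \<noteq> bot \<and> (\<forall>x. x \<le> a \<longrightarrow> x = bot \<or> x = a)"

end

theory Submission
  imports Defs
begin

lemma anti1:
  assumes "sufficiency_op2 g" "x \<le> x'" shows "g x' y \<le> g x y"
proof -
  have "g x' y = g (sup x x') y" using assms(2) by (simp add: sup_absorb2)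
  also have "\<dots> = inf (g x y) (g x' y)" using assms(1) unfolding sufficiency_op2_def by blast
  finally show ?thesis by (metis inf.orderI inf_commute)
qed

lemma anti2:
  assumes "sufficiency_op2 g" "y \<le> y'" shows "g x y' \<le> g x y"
proof -
  have "g x y' = g x (sup y y')" using assms(2) by (simp add: sup_absorb2)
  also have "\<dots> = inf (g x y) (g x y')" using assms(1) unfolding sufficiency_op2_def by blast
  finally show ?thesis by (metis inf.orderI inf_commute)
qed

lemma anti:
  assumes "sufficiency_op2 g" "x \<le> a" "x \<le> b" shows "g a b \<le> g x x"
  by (meson anti1 anti2 assms order_trans)

theorem theorem32:
  fixes g :: "'a::boolean_algebra \<Rightarrow> 'a \<Rightarrow> 'a" and a b :: 'a
  assumes nontriv: "(bot::'a) \<noteq> top"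
    and suff: "sufficiency_op2 g"
    and ABTW: "\<forall>x. x \<noteq> bot \<longrightarrow> g x x \<le> x"
    and gab: "g a b \<noteq> bot"
  shows "inf a b \<le> g a b \<and>
         (inf a b \<noteq> bot \<longrightarrow> g a b = inf a b \<and> is_atom (inf a b))"
proof -
  have 1: "inf a b \<le> g a b"
  proof (rule ccontr)
    assume n: "\<not> inf a b \<le> g a b"
    define d where "d = inf (inf a b) (- g a b)"
    have "d \<noteq> bot" using n unfolding d_def
      by (metis inf_shunt double_compl)
    hence "g d d \<le> d" using ABTW by blast
    moreover have "g a b \<le> g d d" using anti[OF suff] unfolding d_def
      by (meson inf_le1 inf_le2 order_trans)
    ultimately have "g a b \<le> - g a b" unfolding d_def by (meson inf_le2 order_trans)
    thus False using gab by (simp add: inf_absorb1 le_iff_inf)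
  qed
  moreover have "g a b = inf a b \<and> is_atom (inf a b)" if ne: "inf a b \<noteq> bot"
  proof -
    have "g a b \<le> g (inf a b) (inf a b)" using anti[OF suff] by simp
    also have "\<dots> \<le> inf a b" using ABTW ne by blast
    finally have eq: "g a b = inf a b" using 1 by (meson order.antisym)
    have "x = bot \<or> x = inf a b" if "x \<le> inf a b" for x
    proof (rule ccontr)
      assume "\<not> (x = bot \<or> x = inf a b)"
      hence "x \<noteq> bot" "x \<noteq> inf a b" by auto
      have "g a b \<le> g x x" using anti[OF suff] that by (meson inf_le1 inf_le2 order_trans)
      also have "\<dots> \<le> x" using ABTW \<open>x \<noteq> bot\<close> by blast
      finally have "inf a b \<le> x" using eq by simp
      thus False using that \<open>x \<noteq> inf a b\<close> by simp
    qed
    thus ?thesis using eq ne unfolding is_atom_def by blast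
  qed
  ultimately show ?thesis by blast
qed

end
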